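(* Let $n\geq 2$ be an integer and $t\in[0,1]$, and let \[ \mu_{0}= \frac{(3-2n)t+1-2n+\sqrt{(1-t)[(4n-5)t+4n^2-4n+1]} }{2(n-1)^2}. \] Then \[ -\frac{t}{n}\geq \mu_{0}\geq -\frac{t^2 + (2n+1)t}{n^2-t} \geq -\frac{2}{n-1}t. \] *)

theory Defs
  imports Complex_Main
begin

end

theory Submission imports Defs begin
lemma e1: fixes N t :: real shows
 "(t * (N - 2) + N * (2 * N - 1))^2 - N^2 * ((1 - t) * ((4 * N - 5) * t + 4 * N^2 - 4 * N + 1)) = t^2 * ((N-2)^2 + N^2*(4*N-5)) + t * (4*N*(N-1)^2*(N+1))"
  by (simp add: algebra_simps power2_eq_square)
lemma e2: fixes N t :: real shows
 "(N^2 - t)^2 * ((1 - t) * ((4 * N - 5) * t + 4 * N^2 - 4 * N + 1)) - (- (t^2 + (2 * N + 1) * t) * (2 * (N - 1)^2) + ((2*N - 3) * t + 2*N - 1) * (N^2 - t))^2 = t * (1 - t) * (4 * (N-1)^3 * (N+1) * (N+t)^2)"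
  by (simp add: algebra_simps power2_eq_square power3_eq_cube)
theorem proposition5p2:
  fixes n :: nat and t mu0 :: real
  assumes "n \<ge> 2" and "0 \<le> t" and "t \<le> 1"
    and "mu0 = ((3 - 2 * real n) * t + 1 - 2 * real n
                + sqrt ((1 - t) * ((4 * real n - 5) * t + 4 * (real n)^2 - 4 * real n + 1)))
               / (2 * (real n - 1)^2)"
  shows "- t / real n \<ge> mu0
         \<and> mu0 \<ge> - (t^2 + (2 * real n + 1) * t) / ((real n)^2 - t)
         \<and> - (t^2 + (2 * real n + 1) * t) / ((real n)^2 - t) \<ge> - (2 / (real n - 1)) * t"
proof -
  define N where "N = real n"
  have N2: "N \<ge> 2" using assms(1) unfolding N_def by simp
  define R where "R = (1 - t) * ((4 * N - 5) * t + 4 * N^2 - 4 * N + 1)"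
  define S where "S = sqrt R"
  define X where "X = (3 - 2 * N) * t + 1 - 2 * N"
  define D where "D = 2 * (N - 1)^2"
  define den where "den = N^2 - t"
  have Dpos: "D > 0" unfolding D_def using N2 by simp
  have "N^2 \<ge> 4" using N2 power_mono[of 2 N 2] by simp
  hence denpos: "den > 0" unfolding den_def using assms(3) by simp
  have mu: "mu0 = (X + S) / D" unfolding assms(4) X_def S_def R_def D_def N_def by simp
  have "(4*N-5)*t \<ge> 0" using N2 assms(2) by simp
  moreover have "4 * N^2 - 4 * N + 1 = (2*N-1)^2" by (simp add: algebra_simps power2_eq_square)
  moreover have "(2*N-1)^2 \<ge> 0" by simp
  ultimately have "(4 * N - 5) * t + 4 * N^2 - 4 * N + 1 \<ge> 0" by linarith
  hence R0: "R \<ge> 0" unfolding R_def using assms(3) by simp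
  define A0 where "A0 = t * (N - 2) + N * (2 * N - 1)"
  have A0p: "A0 \<ge> 0" unfolding A0_def using N2 assms(2) by simp
  have "t^2 * ((N-2)^2 + N^2*(4*N-5)) + t * (4*N*(N-1)^2*(N+1)) \<ge> 0"
    using N2 assms(2) by (intro add_nonneg_nonneg mult_nonneg_nonneg) auto
  hence "N^2 * R \<le> A0^2" using e1[of t N] unfolding A0_def R_def by linarith
  hence "sqrt (N^2 * R) \<le> A0" using A0p by (simp add: real_le_lsqrt)
  hence "N * S \<le> A0" unfolding S_def using N2 by (simp add: real_sqrt_mult)
  moreover have "A0 = - t * D - N * X" unfolding A0_def D_def X_def
    by (simp add: algebra_simps power2_eq_square)
  ultimately have "N * (X + S) \<le> - t * D" by (simp add: algebra_simps)
  hence "(X + S) \<le> (- t * D) / N" using N2 by (subst pos_le_divide_eq) (auto simp: mult.commute)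
  hence "(X + S) / D \<le> ((- t * D) / N) / D" using divide_right_mono[OF _ less_imp_le[OF Dpos]] by blast
  moreover have "((- t * D) / N) / D = - t / N" using Dpos N2 by (simp add: field_simps)
  ultimately have p1: "mu0 \<le> - t / N" unfolding mu by linarith
  define B where "B = (t^2 + (2 * N + 1) * t) / den"
  define Cn where "Cn = - (t^2 + (2 * N + 1) * t) * D + ((2*N - 3) * t + 2*N - 1) * den"
  have "t * (1 - t) * (4 * (N-1)^3 * (N+1) * (N+t)^2) \<ge> 0"
    using N2 assms(2,3) by (intro mult_nonneg_nonneg) auto
  hence C2: "Cn^2 \<le> den^2 * R" using e2[of N t] unfolding Cn_def den_def R_def D_def by linarith
  have "Cn \<le> den * S"
  proof (cases "Cn \<le> 0")
    case True then show ?thesis using denpos R0 unfolding S_def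
      by (smt (verit) mult_nonneg_nonneg real_sqrt_ge_zero)
  next
    case False
    have "den * S = sqrt (den^2 * R)" unfolding S_def using denpos by (simp add: real_sqrt_mult)
    with False C2 show ?thesis by (simp add: real_le_rsqrt)
  qed
  moreover have "Cn = (- B * D - X) * den"
  proof -
    have Bden: "B * den = t^2 + (2*N+1)*t" unfolding B_def using denpos by simp
    have "(- B * D - X) * den = - (B * den) * D - X * den" by (simp add: algebra_simps)
    also have "\<dots> = Cn" unfolding Bden Cn_def X_def by (simp add: algebra_simps)
    finally show ?thesis by simp
  qed
  ultimately have "(- B * D - X) * den \<le> S * den" by (simp add: mult.commute)
  hence "- B * D - X \<le> S" using denpos by simp
  hence "- B * D \<le> X + S" by simp
  hence p2: "- B \<le> mu0" unfolding mu using Dpos by (simp add: le_divide_eq)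
  have "2 * t * den - (t^2 + (2 * N + 1) * t) * (N - 1) = t * (1 - t) * (N + 1)"
    unfolding den_def by (simp add: algebra_simps power2_eq_square)
  moreover have "t * (1 - t) * (N + 1) \<ge> 0" using assms(2,3) N2 by simp
  ultimately have "(t^2 + (2 * N + 1) * t) * (N - 1) \<le> 2 * t * den" by linarith
  hence "B \<le> 2 * t / (N - 1)" unfolding B_def using denpos N2
    by (simp add: divide_le_eq le_divide_eq mult.commute)
  hence p3: "- B \<ge> - (2 / (N - 1)) * t" by simp
  have m: "- (t^2 + (2*real n+1)*t) / ((real n)^2 - t) = - ((t^2 + (2*real n+1)*t) / ((real n)^2 - t))"
    by (simp only: minus_divide_left)
  show ?thesis using p1 p2 p3 m unfolding B_def den_def N_def by linarith
qed
end
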